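(* Let $G$ be a connected unicyclic graph with largest vertex degree $\Delta=3$ and let $\alpha\in(0,1)$. If $k(G)=3$ and $\alpha>\frac{-\gamma_0}{2-\gamma_0}$, or if $k(G)=2$ and $\alpha>\frac{-\delta_0}{2-\delta_0}$, then \[ \rho(A_\alpha(G))<3\alpha+2(1-\alpha)\sqrt{2}\cos\frac{\pi}{2k(G)+1}. \]
   Context: $A_\alpha(G)=\alpha D(G)+(1-\alpha)A(G)$ ($D$ degree matrix, $A$ adjacency matrix), and $\rho(M)$ is the spectral radius (largest eigenvalue) of a symmetric matrix $M$. A unicyclic graph is a connected graph with exactly one cycle; if $C_r$ is its cycle with vertices $v_1,\dots,v_r$, removing the cycle edges leaves trees $T_1,\dots,T_r$ rooted at $v_1,\dots,v_r$, $h(T_i)$ is the largest distance from $v_i$ to a vertex of $T_i$, and $k(G)=\max_i h(T_i)+1$. Let $Z(\gamma)=\begin{pmatrix}\gamma&\sqrt2&0\\ \sqrt2&0&1\\ 0&1&2\end{pmatrix}$ and $W(\delta)=\begin{pmatrix}\delta&1\\1&2\end{pmatrix}$. $\gamma_0$ is the unique real number (it lies in $(-0.25,-0.2)$) with $\rho(Z(\gamma_0))=2\sqrt2\cos\frac{\pi}{7}$, and $\delta_0$ is the unique real number (it lies in $(-1.2,-1.1)$) with $\rho(W(\delta_0))=2\sqrt2\cos\frac{\pi}{5}$. *)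

theory Defs
  imports "HOL-Analysis.Analysis"
begin

definition simple_graph :: "('a \<Rightarrow> 'a \<Rightarrow> bool) \<Rightarrow> bool" where
  "simple_graph E \<longleftrightarrow> (\<forall>x y. E x y \<longrightarrow> E y x) \<and> (\<forall>x. \<not> E x x)"

fun walk :: "('a \<Rightarrow> 'a \<Rightarrow> bool) \<Rightarrow> 'a list \<Rightarrow> bool" where
  "walk E [] = False"
| "walk E [x] = True"
| "walk E (x # y # xs) = (E x y \<and> walk E (y # xs))"

definition reachable :: "('a \<Rightarrow> 'a \<Rightarrow> bool) \<Rightarrow> 'a \<Rightarrow> 'a \<Rightarrow> bool" where
  "reachable E u v \<longleftrightarrow> (\<exists>xs. walk E xs \<and> hd xs = u \<and> last xs = v)"

definition gdist :: "('a \<Rightarrow> 'a \<Rightarrow> bool) \<Rightarrow> 'a \<Rightarrow> 'a \<Rightarrow> nat" where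
  "gdist E u v = (LEAST n. \<exists>xs. walk E xs \<and> hd xs = u \<and> last xs = v \<and> length xs = n + 1)"

definition connected_graph :: "('a \<Rightarrow> 'a \<Rightarrow> bool) \<Rightarrow> bool" where
  "connected_graph E \<longleftrightarrow> (\<forall>u v. reachable E u v)"

definition is_cycle :: "('a \<Rightarrow> 'a \<Rightarrow> bool) \<Rightarrow> 'a list \<Rightarrow> bool" where
  "is_cycle E C \<longleftrightarrow> distinct C \<and> length C \<ge> 3 \<and>
     (\<forall>i < length C. E (C ! i) (C ! ((i + 1) mod length C)))"

definition cycle_edge :: "'a list \<Rightarrow> 'a \<Rightarrow> 'a \<Rightarrow> bool" where
  "cycle_edge C x y \<longleftrightarrow> (\<exists>i < length C. {x, y} = {C ! i, C ! ((i + 1) mod length C)})"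

definition unicyclic :: "('a \<Rightarrow> 'a \<Rightarrow> bool) \<Rightarrow> bool" where
  "unicyclic E \<longleftrightarrow> connected_graph E \<and> (\<exists>C. is_cycle E C) \<and>
     (\<forall>C D. is_cycle E C \<and> is_cycle E D \<longrightarrow> {(x,y). cycle_edge C x y} = {(x,y). cycle_edge D x y})"

definition remove_cycle :: "('a \<Rightarrow> 'a \<Rightarrow> bool) \<Rightarrow> 'a list \<Rightarrow> 'a \<Rightarrow> 'a \<Rightarrow> bool" where
  "remove_cycle E C x y \<longleftrightarrow> E x y \<and> \<not> cycle_edge C x y"

text \<open>k(G) = max_i h(T_i) + 1, where h(T_i) is the largest distance from v_i to a vertex of T_i
  (T_i = component of v_i after removing the cycle edges).\<close>
definition k_of :: "('a \<Rightarrow> 'a \<Rightarrow> bool) \<Rightarrow> 'a list \<Rightarrow> nat" where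
  "k_of E C = Max {gdist (remove_cycle E C) v u | v u. v \<in> set C \<and> reachable (remove_cycle E C) v u} + 1"

definition kG :: "('a \<Rightarrow> 'a \<Rightarrow> bool) \<Rightarrow> nat" where
  "kG E = k_of E (SOME C. is_cycle E C)"

definition degree :: "('a::finite \<Rightarrow> 'a \<Rightarrow> bool) \<Rightarrow> 'a \<Rightarrow> nat" where
  "degree E v = card {u. E v u}"

definition max_degree :: "('a::finite \<Rightarrow> 'a \<Rightarrow> bool) \<Rightarrow> nat" where
  "max_degree E = Max (range (degree E))"

definition adj_matrix :: "('a::finite \<Rightarrow> 'a \<Rightarrow> bool) \<Rightarrow> real^'a^'a" where
  "adj_matrix E = (\<chi> i j. if E i j then 1 else 0)"

definition deg_matrix :: "('a::finite \<Rightarrow> 'a \<Rightarrow> bool) \<Rightarrow> real^'a^'a" where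
  "deg_matrix E = (\<chi> i j. if i = j then real (degree E i) else 0)"

definition A_alpha :: "real \<Rightarrow> ('a::finite \<Rightarrow> 'a \<Rightarrow> bool) \<Rightarrow> real^'a^'a" where
  "A_alpha \<alpha> E = \<alpha> *\<^sub>R deg_matrix E + (1 - \<alpha>) *\<^sub>R adj_matrix E"

text \<open>Spectral radius of a symmetric real matrix = its largest (real) eigenvalue.\<close>
definition rho :: "real^'n^'n \<Rightarrow> real" where
  "rho M = Max {l. \<exists>v. v \<noteq> 0 \<and> M *v v = l *\<^sub>R v}"

definition Zmat :: "real \<Rightarrow> real^3^3" where
  "Zmat \<gamma> = vector [vector [\<gamma>, sqrt 2, 0], vector [sqrt 2, 0, 1], vector [0, 1, 2]]"

definition Wmat :: "real \<Rightarrow> real^2^2" where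
  "Wmat \<delta> = vector [vector [\<delta>, 1], vector [1, 2]]"

definition gamma0 :: real where
  "gamma0 = (THE \<gamma>. rho (Zmat \<gamma>) = 2 * sqrt 2 * cos (pi / 7))"

definition delta0 :: real where
  "delta0 = (THE \<delta>. rho (Wmat \<delta>) = 2 * sqrt 2 * cos (pi / 5))"

end

theory Submission
  imports Defs
begin

lemma walk_ne: "walk E xs \<Longrightarrow> xs \<noteq> []" by (cases xs) auto

lemma walk_Cons_iff: "walk E (x # xs) \<longleftrightarrow> (xs = [] \<or> (E x (hd xs) \<and> walk E xs))"
  by (cases xs) auto

lemma walk_snoc_iff: "walk E (xs @ [y]) \<longleftrightarrow> (xs = [] \<or> (walk E xs \<and> E (last xs) y))"
  by (induction xs) (auto simp: walk_Cons_iff)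

lemma walk_split: "walk E (xs @ y # ys) \<longleftrightarrow> walk E (xs @ [y]) \<and> walk E (y # ys)"
  by (induction xs) (auto simp: walk_Cons_iff hd_append)

lemma walk_nth: "walk E xs \<Longrightarrow> Suc i < length xs \<Longrightarrow> E (xs!i) (xs!Suc i)"
proof (induction E xs arbitrary: i rule: walk.induct)
  case (3 E x y xs) then show ?case by (cases i) auto
qed auto

lemma nth_walk: "xs \<noteq> [] \<Longrightarrow> (\<forall>i. Suc i < length xs \<longrightarrow> E (xs!i) (xs!Suc i)) \<Longrightarrow> walk E xs"
proof (induction xs)
  case (Cons x xs)
  show ?case
  proof (cases xs)
    case Nil then show ?thesis by simp
  next
    case (Cons y ys)
    have "E x y" using Cons.prems(2)[rule_format, of 0] Cons by simp
    moreover have "walk E xs"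
      using Cons.IH Cons.prems(2) Cons by force
    ultimately show ?thesis using Cons by simp
  qed
qed simp

lemma walk_join:
  assumes "walk E xs" "walk E ys" "last xs = hd ys"
  shows "walk E (xs @ tl ys) \<and> hd (xs @ tl ys) = hd xs \<and> last (xs @ tl ys) = last ys
     \<and> set (xs @ tl ys) \<subseteq> set xs \<union> set ys"
proof -
  obtain y ys' where ys: "ys = y # ys'" using walk_ne[OF assms(2)] by (cases ys) auto
  obtain xs' where xs: "xs = xs' @ [y]" using walk_ne[OF assms(1)] assms(3) ys
    by (metis append_butlast_last_id list.sel(1))
  have "walk E (xs' @ y # ys')" using walk_split[of E xs' y ys'] assms(1,2) xs ys by simp
  then show ?thesis using xs ys by (auto simp: hd_append)
qed

lemma walk_rev: "(\<And>x y. E x y \<Longrightarrow> E y x) \<Longrightarrow> walk E xs \<Longrightarrow> walk E (rev xs)"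
proof (induction xs)
  case (Cons x xs)
  show ?case
  proof (cases "xs = []")
    case True then show ?thesis by simp
  next
    case False
    then have "walk E xs" "E x (hd xs)" using Cons.prems(2) by (auto simp: walk_Cons_iff)
    then show ?thesis using Cons False by (auto simp: walk_snoc_iff last_rev)
  qed
qed simp

lemma walk_mono: "walk E xs \<Longrightarrow> (\<And>x y. x \<in> set xs \<Longrightarrow> y \<in> set xs \<Longrightarrow> E x y \<Longrightarrow> E' x y) \<Longrightarrow> walk E' xs"
  by (induction E xs rule: walk.induct) auto

lemma walk_take: "walk E xs \<Longrightarrow> 0 < n \<Longrightarrow> walk E (take n xs)"
proof (induction E xs arbitrary: n rule: walk.induct)
  case (2 E x) then show ?case by (cases n) auto
next
  case (3 E x y xs)
  show ?case
  proof (cases n)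
    case 0 then show ?thesis using 3 by simp
  next
    case (Suc m)
    show ?thesis
    proof (cases m)
      case 0 then show ?thesis using Suc by simp
    next
      case (Suc m')
      have "walk E (take m (y # xs))" using 3(1)[of m] 3(2) Suc by simp
      then have "walk E (y # take m' xs)" using Suc by simp
      then show ?thesis using 3(2) \<open>n = Suc m\<close> Suc by simp
    qed
  qed
qed simp

lemma walk_distinct:
  "walk E xs \<Longrightarrow> \<exists>ys. walk E ys \<and> hd ys = hd xs \<and> last ys = last xs \<and> distinct ys \<and> set ys \<subseteq> set xs"
proof (induction "length xs" arbitrary: xs rule: less_induct)
  case less
  show ?case
  proof (cases "distinct xs")
    case True then show ?thesis using less by blast
  next
    case False
    then obtain a y b c where xs: "xs = a @ [y] @ b @ [y] @ c" using not_distinct_decomp by blast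
    let ?zs = "a @ [y] @ c"
    have w1: "walk E (a @ [y])" and w2: "walk E (y # b @ [y] @ c)"
      using less.prems xs walk_split[of E a y "b @ [y] @ c"] by auto
    have "walk E (y # c)" using w2 walk_split[of E "y # b" y c] by auto
    then have wz: "walk E ?zs" using w1 walk_split[of E a y c] by auto
    have "length ?zs < length xs" using xs by simp
    then obtain ys where ys: "walk E ys" "hd ys = hd ?zs" "last ys = last ?zs" "distinct ys" "set ys \<subseteq> set ?zs"
      using less.hyps wz by blast
    have "hd ?zs = hd xs" using xs by (simp add: hd_append)
    moreover have "last ?zs = last xs" using xs by (cases c) auto
    moreover have "set ?zs \<subseteq> set xs" using xs by auto
    ultimately show ?thesis using ys by (intro exI[of _ ys]) auto
  qed
qed

lemma cycle_through_edge:
  assumes sg: "simple_graph E" and ab: "E a b"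
    and w: "walk (\<lambda>x y. E x y \<and> {x,y} \<noteq> {a,b}) ws" "hd ws = b" "last ws = a"
  shows "\<exists>D. is_cycle E D \<and> cycle_edge D a b"
proof -
  let ?E' = "\<lambda>x y. E x y \<and> {x,y} \<noteq> {a,b}"
  obtain ds where ds: "walk ?E' ds" "hd ds = b" "last ds = a" "distinct ds"
    using walk_distinct[OF w(1)] w by auto
  have ne: "a \<noteq> b" using sg ab unfolding simple_graph_def by auto
  have dsne: "ds \<noteq> []" using walk_ne ds(1) by blast
  define n where "n = length ds"
  have n3: "n \<ge> 3"
  proof (rule ccontr)
    assume "\<not> n \<ge> 3"
    moreover have "n \<noteq> 0" using dsne n_def by simp
    ultimately have "n = 1 \<or> n = 2" by arith
    then show False
    proof
      assume "n = 1"
      then obtain x where "ds = [x]" using n_def by (cases ds) auto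
      then show False using ds ne by simp
    next
      assume "n = 2"
      then obtain x y where "ds = [x, y]" using n_def
        by (cases ds; cases "tl ds") auto
      then show False using ds by (simp add: insert_commute)
    qed
  qed
  have hd0: "ds ! 0 = b" using ds(2) dsne by (simp add: hd_conv_nth)
  have lastn: "ds ! (n - 1) = a" using ds(3) dsne by (simp add: last_conv_nth n_def)
  have cyc: "is_cycle E ds"
    unfolding is_cycle_def
  proof (intro conjI allI impI)
    show "distinct ds" by fact
    show "3 \<le> length ds" using n3 n_def by simp
    fix i assume i: "i < length ds"
    show "E (ds ! i) (ds ! ((i + 1) mod length ds))"
    proof (cases "Suc i < length ds")
      case True
      then show ?thesis using walk_nth[OF ds(1) True] by simp
    next
      case False
      then have "i = n - 1" "Suc i = length ds" using i n_def by auto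
      then have "i = n - 1" "(i + 1) mod length ds = 0" by auto
      then show ?thesis using hd0 lastn ab n_def by simp
    qed
  qed
  have "cycle_edge ds a b"
    unfolding cycle_edge_def
  proof (intro exI conjI)
    show "n - 1 < length ds" using n3 n_def by simp
    have e: "n - 1 + 1 = length ds" using n3 n_def by simp
    have "(n - 1 + 1) mod length ds = 0" by (simp only: e mod_self)
    then show "{a, b} = {ds ! (n - 1), ds ! ((n - 1 + 1) mod length ds)}" using hd0 lastn by simp
  qed
  then show ?thesis using cyc by blast
qed

lemma cycle_edge_in: "cycle_edge C a b \<Longrightarrow> a \<in> set C \<and> b \<in> set C"
proof -
  assume "cycle_edge C a b"
  then obtain i where i: "i < length C" "{a,b} = {C!i, C!((i+1) mod length C)}"
    unfolding cycle_edge_def by blast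
  have "0 < length C" using i(1) by linarith
  then have "C!i \<in> set C" "C!((i+1) mod length C) \<in> set C" using i(1) by auto
  then show ?thesis using i(2) by (auto simp: doubleton_eq_iff)
qed

lemma cycle_edge_sym: "cycle_edge C a b \<Longrightarrow> cycle_edge C b a"
  unfolding cycle_edge_def by (simp add: insert_commute)

lemma cycle_edge_E:
  assumes "simple_graph E" "is_cycle E C" "cycle_edge C a b" shows "E a b"
proof -
  obtain i where i: "i < length C" "{a,b} = {C!i, C!((i+1) mod length C)}"
    using assms(3) unfolding cycle_edge_def by blast
  have e: "E (C!i) (C!((i+1) mod length C))" using assms(2) i(1) unfolding is_cycle_def by blast
  then have "E (C!((i+1) mod length C)) (C!i)" using assms(1) unfolding simple_graph_def by blast
  then show ?thesis using e i(2) by (auto simp: doubleton_eq_iff)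
qed

lemma cycle_walk0:
  assumes "is_cycle E C" "j < length C"
  shows "walk (cycle_edge C) (map (\<lambda>t. C!t) [0..<Suc j])"
proof (rule nth_walk)
  show "map (\<lambda>t. C!t) [0..<Suc j] \<noteq> []" by simp
  show "\<forall>i. Suc i < length (map (\<lambda>t. C!t) [0..<Suc j]) \<longrightarrow>
     cycle_edge C (map (\<lambda>t. C!t) [0..<Suc j] ! i) (map (\<lambda>t. C!t) [0..<Suc j] ! Suc i)"
  proof (intro allI impI)
    fix i assume i: "Suc i < length (map (\<lambda>t. C!t) [0..<Suc j])"
    then have i': "Suc i \<le> j" by simp
    have "(i + 1) mod length C = Suc i" using i' assms(2) by simp
    then have "cycle_edge C (C!i) (C!Suc i)" unfolding cycle_edge_def using i' assms(2)
      by (intro exI[of _ i]) auto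
    then show "cycle_edge C (map (\<lambda>t. C!t) [0..<Suc j] ! i) (map (\<lambda>t. C!t) [0..<Suc j] ! Suc i)"
      using i by (simp del: upt_Suc)
  qed
qed

lemma cycle_walk:
  assumes "is_cycle E C" "u \<in> set C" "w \<in> set C"
  shows "\<exists>ws. walk (cycle_edge C) ws \<and> hd ws = u \<and> last ws = w \<and> set ws \<subseteq> set C"
proof -
  obtain i where i: "i < length C" "u = C!i" using assms(2) by (metis in_set_conv_nth)
  obtain j where j: "j < length C" "w = C!j" using assms(3) by (metis in_set_conv_nth)
  define wi where "wi = map (\<lambda>t. C!t) [0..<Suc i]"
  define wj where "wj = map (\<lambda>t. C!t) [0..<Suc j]"
  have "walk (cycle_edge C) wi" using cycle_walk0 assms(1) i(1) wi_def by blast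
  then have r: "walk (cycle_edge C) (rev wi)" using walk_rev[of "cycle_edge C" wi, OF cycle_edge_sym] by blast
  have wj: "walk (cycle_edge C) wj" using cycle_walk0 assms(1) j(1) wj_def by blast
  have "last (rev wi) = hd wj" by (simp add: wi_def wj_def last_rev upt_conv_Cons del: upt_Suc)
  note J = walk_join[OF r wj this]
  have s1: "set wi \<subseteq> set C" "set wj \<subseteq> set C" using i j by (auto simp: wi_def wj_def)
  have "hd (rev wi) = u" using i by (simp add: wi_def hd_rev)
  moreover have "last wj = w" using j by (simp add: wj_def)
  moreover have "set (rev wi @ tl wj) \<subseteq> set C" using J s1 by auto
  ultimately show ?thesis using J by metis
qed


locale ucg =
  fixes E :: "'a::finite \<Rightarrow> 'a \<Rightarrow> bool"
  assumes simple: "simple_graph E" and uni: "unicyclic E"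
begin

definition C where "C = (SOME C. is_cycle E C)"

lemma cyc: "is_cycle E C"
  using uni unfolding unicyclic_def C_def by (metis someI_ex)

definition R where "R = remove_cycle E C"

lemma symG: "E x y \<Longrightarrow> E y x" using simple unfolding simple_graph_def by blast
lemma irr: "\<not> E x x" using simple unfolding simple_graph_def by blast

lemma R_E: "R x y \<Longrightarrow> E x y" by (simp add: R_def remove_cycle_def)
lemma R_sym: "R x y \<Longrightarrow> R y x"
  by (auto simp: R_def remove_cycle_def symG dest: cycle_edge_sym)
lemma R_notC: "E x y \<Longrightarrow> x \<notin> set C \<Longrightarrow> R x y"
  by (auto simp: R_def remove_cycle_def dest: cycle_edge_in)
lemma R_notC2: "E x y \<Longrightarrow> y \<notin> set C \<Longrightarrow> R x y"
  by (auto simp: R_def remove_cycle_def dest: cycle_edge_in)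

lemma uni_edge: "is_cycle E D \<Longrightarrow> cycle_edge D a b \<Longrightarrow> cycle_edge C a b"
proof -
  assume "is_cycle E D" "cycle_edge D a b"
  then have "{(x,y). cycle_edge C x y} = {(x,y). cycle_edge D x y}"
    using uni cyc unfolding unicyclic_def by blast
  then show ?thesis using \<open>cycle_edge D a b\<close> by blast
qed

lemma Cne: "C \<noteq> []" using cyc unfolding is_cycle_def by auto

lemma to_cycle_aux: "walk E ys \<Longrightarrow> hd ys \<in> set C \<Longrightarrow> \<exists>ws. walk R ws \<and> hd ws \<in> set C \<and> last ws = last ys"
proof (induction ys rule: rev_induct)
  case Nil then show ?case by simp
next
  case (snoc y ys)
  show ?case
  proof (cases "y \<in> set C")
    case True then show ?thesis by (intro exI[of _ "[y]"]) simp
  next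
    case False
    then have ne: "ys \<noteq> []" using snoc.prems by auto
    then have w: "walk E ys" "E (last ys) y" using snoc.prems(1) by (auto simp: walk_snoc_iff)
    have "hd ys \<in> set C" using snoc.prems(2) ne by (simp add: hd_append)
    then obtain ws where ws: "walk R ws" "hd ws \<in> set C" "last ws = last ys" using snoc.IH w by blast
    have "R (last ys) y" using R_notC2 w(2) False by blast
    then have "walk R (ws @ [y])" using ws walk_ne by (auto simp: walk_snoc_iff)
    moreover have "hd (ws @ [y]) \<in> set C" using ws walk_ne[OF ws(1)] by (simp add: hd_append)
    ultimately show ?thesis by (intro exI[of _ "ws @ [y]"]) simp
  qed
qed

lemma to_cycle: "\<exists>ws. walk R ws \<and> hd ws \<in> set C \<and> last ws = v"
proof -
  have "reachable E (C!0) v" using uni unfolding unicyclic_def connected_graph_def by blast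
  then obtain xs where "walk E xs" "hd xs = C!0" "last xs = v" unfolding reachable_def by blast
  moreover have "C!0 \<in> set C" using Cne by simp
  ultimately show ?thesis using to_cycle_aux by metis
qed

definition dep where
  "dep v = (LEAST m. \<exists>ws. walk R ws \<and> hd ws \<in> set C \<and> last ws = v \<and> length ws = Suc m)"

lemma dep_ex: "\<exists>ws. walk R ws \<and> hd ws \<in> set C \<and> last ws = v \<and> length ws = Suc (dep v)"
proof -
  obtain ws where ws: "walk R ws" "hd ws \<in> set C" "last ws = v" using to_cycle by blast
  then have "length ws = Suc (length ws - 1)" using walk_ne by fastforce
  then have "\<exists>m. \<exists>ws. walk R ws \<and> hd ws \<in> set C \<and> last ws = v \<and> length ws = Suc m" using ws by blast
  then show ?thesis unfolding dep_def by (rule LeastI_ex)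
qed

lemma dep_le: "walk R ws \<Longrightarrow> hd ws \<in> set C \<Longrightarrow> last ws = v \<Longrightarrow> dep v \<le> length ws - 1"
proof -
  assume a: "walk R ws" "hd ws \<in> set C" "last ws = v"
  then have "length ws = Suc (length ws - 1)" using walk_ne by fastforce
  then show ?thesis unfolding dep_def using a by (intro Least_le) blast
qed

lemma dep0: "dep v = 0 \<longleftrightarrow> v \<in> set C"
proof
  assume "dep v = 0"
  then obtain ws where "walk R ws" "hd ws \<in> set C" "last ws = v" "length ws = 1" using dep_ex by fastforce
  then show "v \<in> set C" by (cases ws) auto
next
  assume "v \<in> set C"
  then have "dep v \<le> length [v] - 1" by (intro dep_le) auto
  then show "dep v = 0" by simp
qed

lemma dep_edge: "R u w \<Longrightarrow> dep w \<le> Suc (dep u)"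
proof -
  assume r: "R u w"
  obtain ws where ws: "walk R ws" "hd ws \<in> set C" "last ws = u" "length ws = Suc (dep u)" using dep_ex by blast
  have ne: "ws \<noteq> []" using walk_ne ws(1) by blast
  have "walk R (ws @ [w])" using ws r ne by (auto simp: walk_snoc_iff)
  moreover have "hd (ws @ [w]) \<in> set C" using ws ne by (simp add: hd_append)
  ultimately have "dep w \<le> length (ws @ [w]) - 1" by (intro dep_le) auto
  then show ?thesis using ws by simp
qed

lemma dep_avoid:
  assumes "dep u \<le> dep v" "u \<noteq> v"
  shows "\<exists>ws. walk R ws \<and> hd ws \<in> set C \<and> last ws = u \<and> v \<notin> set ws"
proof -
  obtain ws where ws: "walk R ws" "hd ws \<in> set C" "last ws = u" "length ws = Suc (dep u)" using dep_ex by blast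
  have ne: "ws \<noteq> []" using walk_ne ws(1) by blast
  have "v \<notin> set ws"
  proof
    assume "v \<in> set ws"
    then obtain p where p: "p < length ws" "ws!p = v" by (metis in_set_conv_nth)
    have "p \<noteq> length ws - 1" using p ws(3) assms(2) ne by (auto simp: last_conv_nth)
    then have pl: "p < dep u" using p ws(4) by simp
    have tk: "take (Suc p) ws = take p ws @ [v]" using p by (simp add: take_Suc_conv_app_nth)
    have "walk R (take (Suc p) ws)" using walk_take ws(1) by blast
    moreover have "hd (take (Suc p) ws) \<in> set C" using ws(2) ne by simp
    moreover have "last (take (Suc p) ws) = v" using tk by simp
    ultimately have "dep v \<le> length (take (Suc p) ws) - 1" by (intro dep_le)
    then have "dep v \<le> p" using p by simp
    then show False using pl assms(1) by simp
  qed
  then show ?thesis using ws by blast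
qed

end

context ucg begin
lemma no_chord:
  assumes "u \<in> set C" "w \<in> set C" "E u w"
  shows "cycle_edge C u w"
proof (rule ccontr)
  assume nc: "\<not> cycle_edge C u w"
  obtain ws where ws: "walk (cycle_edge C) ws" "hd ws = w" "last ws = u" "set ws \<subseteq> set C"
    using cycle_walk[OF cyc assms(2) assms(1)] by blast
  have "walk (\<lambda>x y. E x y \<and> {x,y} \<noteq> {u,w}) ws"
  proof (rule walk_mono[OF ws(1)])
    fix x y assume "cycle_edge C x y"
    moreover then have "E x y" using cycle_edge_E[OF simple cyc] by blast
    moreover have "{x,y} \<noteq> {u,w}"
    proof
      assume "{x,y} = {u,w}"
      then have "cycle_edge C u w" using \<open>cycle_edge C x y\<close> unfolding cycle_edge_def by metis
      then show False using nc by simp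
    qed
    ultimately show "E x y \<and> {x,y} \<noteq> {u,w}" by blast
  qed
  then obtain D where "is_cycle E D" "cycle_edge D u w"
    using cycle_through_edge[OF simple assms(3)] ws by blast
  then show False using uni_edge nc by blast
qed

lemma tree:
  assumes v: "v \<notin> set C" and e: "E v u1" "E v u2" and d: "dep u1 \<le> dep v" "dep u2 \<le> dep v"
  shows "u1 = u2"
proof (rule ccontr)
  assume neq: "u1 \<noteq> u2"
  have n1: "u1 \<noteq> v" "u2 \<noteq> v" using e irr by auto
  obtain ws1 where ws1: "walk R ws1" "hd ws1 \<in> set C" "last ws1 = u1" "v \<notin> set ws1"
    using dep_avoid[OF d(1) n1(1)] by blast
  obtain ws2 where ws2: "walk R ws2" "hd ws2 \<in> set C" "last ws2 = u2" "v \<notin> set ws2"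
    using dep_avoid[OF d(2) n1(2)] by blast
  obtain cw where cw: "walk (cycle_edge C) cw" "hd cw = hd ws2" "last cw = hd ws1" "set cw \<subseteq> set C"
    using cycle_walk[OF cyc ws2(2) ws1(2)] by blast
  have w1: "walk E ws1" using walk_mono[OF ws1(1)] R_E by blast
  have "walk E ws2" using walk_mono[OF ws2(1)] R_E by blast
  then have w2: "walk E (rev ws2)" using walk_rev[of E ws2, OF symG] by blast
  have w3: "walk E cw" using walk_mono[OF cw(1)] cycle_edge_E[OF simple cyc] by blast
  have ne2: "ws2 \<noteq> []" using walk_ne ws2(1) by blast
  have "last (rev ws2) = hd cw" using cw ne2 by (simp add: last_rev)
  note J1 = walk_join[OF w2 w3 this]
  define W1 where "W1 = rev ws2 @ tl cw"
  have "last W1 = hd ws1" using J1 cw W1_def by simp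
  note J2 = walk_join[OF conjunct1[OF J1[folded W1_def]] w1 this]
  define W where "W = W1 @ tl ws1"
  have wW: "walk E W" using J2 W_def by blast
  have hW: "hd W = u2" using J1 J2 W1_def W_def ne2 ws2(3) by (simp add: hd_rev)
  have lW: "last W = u1" using J2 W_def ws1 by simp
  have vW: "v \<notin> set W" using J1 J2 W1_def W_def ws1(4) ws2(4) cw(4) v by auto
  let ?E' = "\<lambda>x y. E x y \<and> {x,y} \<noteq> {u1,v}"
  have wW': "walk ?E' W"
  proof (rule walk_mono[OF wW])
    fix x y assume "x \<in> set W" "y \<in> set W" "E x y"
    then show "E x y \<and> {x,y} \<noteq> {u1,v}" using vW by auto
  qed
  have Wne: "W \<noteq> []" using walk_ne wW by blast
  have "?E' v u2" using e neq n1 by (auto simp: doubleton_eq_iff)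
  then have "walk ?E' (v # W)" using wW' hW Wne by (simp add: walk_Cons_iff)
  then obtain D where "is_cycle E D" "cycle_edge D u1 v"
    using cycle_through_edge[OF simple symG[OF e(1)], of "v # W"] lW Wne by auto
  then have "cycle_edge C u1 v" using uni_edge by blast
  then show False using cycle_edge_in[of C u1 v] v by simp
qed

end

context ucg begin
lemma kG_eq: "kG E = k_of E C" by (simp add: kG_def C_def)

lemma dep_lt_k: "dep v < kG E"
proof -
  obtain ws where ws: "walk R ws" "hd ws \<in> set C" "last ws = v" "length ws = Suc (dep v)" using dep_ex by blast
  define c where "c = hd ws"
  have "reachable R c v" using ws c_def unfolding reachable_def by blast
  define S where "S = {gdist (remove_cycle E C) v u | v u. v \<in> set C \<and> reachable (remove_cycle E C) v u}"
  have gin: "gdist R c v \<in> S" using ws(2) \<open>reachable R c v\<close> c_def unfolding S_def R_def by blast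
  have "S \<subseteq> (\<lambda>(a,b). gdist (remove_cycle E C) a b) ` UNIV" unfolding S_def by auto
  then have fin: "finite S" by (rule finite_subset) simp
  have "\<exists>m xs. walk R xs \<and> hd xs = c \<and> last xs = v \<and> length xs = m + 1"
    using ws c_def by auto
  then have "\<exists>xs. walk R xs \<and> hd xs = c \<and> last xs = v \<and> length xs = gdist R c v + 1"
    unfolding gdist_def by (rule LeastI_ex)
  then obtain xs where xs: "walk R xs" "hd xs = c" "last xs = v" "length xs = gdist R c v + 1"
    by blast
  have "dep v \<le> length xs - 1" using dep_le[OF xs(1) _ xs(3)] xs(2) ws(2) c_def by simp
  also have "\<dots> = gdist R c v" using xs by simp
  also have "\<dots> \<le> Max S" using fin gin by simp
  finally have "dep v \<le> Max S" .
  then show ?thesis unfolding kG_eq k_of_def S_def by simp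
qed

lemma cyc_nbrs:
  assumes "v \<in> set C"
  shows "card {w. E v w \<and> w \<in> set C} \<le> 2"
proof -
  let ?n = "length C"
  obtain p where p: "p < ?n" "v = C!p" using assms by (metis in_set_conv_nth)
  have dC: "distinct C" using cyc unfolding is_cycle_def by blast
  have sub: "{w. E v w \<and> w \<in> set C} \<subseteq> {C!((p+1) mod ?n), C!((p + ?n - 1) mod ?n)}"
  proof
    fix w assume "w \<in> {w. E v w \<and> w \<in> set C}"
    then have "cycle_edge C v w" using no_chord assms by blast
    then obtain i where i: "i < ?n" "{v,w} = {C!i, C!((i+1) mod ?n)}" unfolding cycle_edge_def by blast
    have "0 < ?n" using i(1) by linarith
    then have im: "(i+1) mod ?n < ?n" by simp
    from i(2) consider "v = C!i \<and> w = C!((i+1) mod ?n)" | "v = C!((i+1) mod ?n) \<and> w = C!i"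
      by (auto simp: doubleton_eq_iff)
    then show "w \<in> {C!((p+1) mod ?n), C!((p + ?n - 1) mod ?n)}"
    proof cases
      case 1
      then have "i = p" using p dC i(1) nth_eq_iff_index_eq by metis
      then show ?thesis using 1 by simp
    next
      case 2
      then have ip: "(i+1) mod ?n = p" using p dC im nth_eq_iff_index_eq by metis
      have "i = (p + ?n - 1) mod ?n"
      proof (cases "i + 1 < ?n")
        case True then have "p = i + 1" using ip by simp
        then show ?thesis using i(1) by simp
      next
        case False then have "i + 1 = ?n" using i(1) by simp
        then have "p = 0" using ip by simp
        then show ?thesis using \<open>i + 1 = ?n\<close> by simp
      qed
      then show ?thesis using 2 by simp
    qed
  qed
  have "card {w. E v w \<and> w \<in> set C} \<le> card {C!((p+1) mod ?n), C!((p + ?n - 1) mod ?n)}"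
    by (rule card_mono[OF _ sub]) simp
  also have "\<dots> \<le> 2" by (cases "C!((p+1) mod ?n) = C!((p + ?n - 1) mod ?n)") simp_all
  finally show ?thesis .
qed

end


definition eigs :: "real^'n^'n \<Rightarrow> real set" where
  "eigs M = {l. \<exists>v. v \<noteq> 0 \<and> M *v v = l *\<^sub>R v}"

lemma rho_eigs: "rho M = Max (eigs M)" by (simp add: rho_def eigs_def)

definition symm :: "real^'n^'n \<Rightarrow> bool" where
  "symm M \<longleftrightarrow> (\<forall>i j. M$i$j = M$j$i)"

lemma mv_comp: "(M *v x) $ i = (\<Sum>j\<in>UNIV. M$i$j * x$j)"
  by (simp add: matrix_vector_mult_def)

lemma symm_inner:
  assumes "symm M"
  shows "inner (M *v x) y = inner x (M *v y)"
proof -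
  have "inner (M *v x) y = (\<Sum>i\<in>UNIV. (\<Sum>j\<in>UNIV. M$i$j * x$j) * y$i)"
    by (simp add: inner_vec_def mv_comp)
  also have "\<dots> = (\<Sum>i\<in>UNIV. \<Sum>j\<in>UNIV. M$i$j * x$j * y$i)"
    by (simp add: sum_distrib_right)
  also have "\<dots> = (\<Sum>j\<in>UNIV. \<Sum>i\<in>UNIV. M$i$j * x$j * y$i)"
    by (rule sum.swap)
  also have "\<dots> = (\<Sum>j\<in>UNIV. x$j * (\<Sum>i\<in>UNIV. M$j$i * y$i))"
    using assms by (simp add: symm_def sum_distrib_left mult_ac)
  also have "\<dots> = inner x (M *v y)"
    by (simp add: inner_vec_def mv_comp)
  finally show ?thesis .
qed

lemma eigs_finite:
  fixes M :: "real^'n^'n"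
  assumes "symm M"
  shows "finite (eigs M)"
proof -
  define ev where "ev l = (SOME v. v \<noteq> 0 \<and> M *v v = l *\<^sub>R v)" for l
  have ev: "ev l \<noteq> 0 \<and> M *v ev l = l *\<^sub>R ev l" if "l \<in> eigs M" for l
  proof -
    from that obtain v where "v \<noteq> 0 \<and> M *v v = l *\<^sub>R v" unfolding eigs_def by blast
    then show ?thesis unfolding ev_def by (rule someI)
  qed
  have inj: "inj_on ev (eigs M)"
  proof (rule inj_onI)
    fix l m assume "l \<in> eigs M" "m \<in> eigs M" "ev l = ev m"
    then have "l *\<^sub>R ev l = m *\<^sub>R ev l" "ev l \<noteq> 0" using ev by metis+
    then show "l = m" by (metis scaleR_cancel_right)
  qed
  have orth: "pairwise orthogonal (ev ` eigs M)"
    unfolding pairwise_def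
  proof (clarify)
    fix l m assume lm: "l \<in> eigs M" "m \<in> eigs M" "ev l \<noteq> ev m"
    then have "l \<noteq> m" by auto
    have "l * inner (ev l) (ev m) = inner (M *v ev l) (ev m)" using ev[OF lm(1)] by simp
    also have "\<dots> = inner (ev l) (M *v ev m)" by (rule symm_inner[OF assms])
    also have "\<dots> = m * inner (ev l) (ev m)" using ev[OF lm(2)] by simp
    finally have "(l - m) * inner (ev l) (ev m) = 0" by (simp add: algebra_simps)
    with \<open>l \<noteq> m\<close> show "orthogonal (ev l) (ev m)" by (simp add: orthogonal_def)
  qed
  have "0 \<notin> ev ` eigs M" using ev by auto
  then have "independent (ev ` eigs M)" using orth pairwise_orthogonal_independent by blast
  then have "finite (ev ` eigs M)" using independent_bound by blast
  then show ?thesis using inj finite_imageD by blast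
qed

lemma eigs_nonempty:
  fixes M :: "real^'n^'n"
  assumes "symm M"
  shows "eigs M \<noteq> {}"
proof -
  define Q where "Q x = inner x (M *v x)" for x :: "real^'n"
  have cont: "continuous_on (sphere 0 1) Q"
    unfolding Q_def by (intro continuous_intros)
  have ne: "sphere (0::real^'n) 1 \<noteq> {}"
  proof -
    obtain i :: 'n where True by simp
    have "axis i (1::real) \<in> sphere 0 1" by simp
    then show ?thesis by blast
  qed
  obtain x0 where x0: "x0 \<in> sphere 0 1" and mx: "\<forall>y\<in>sphere 0 1. Q y \<le> Q x0"
    using continuous_attains_sup[OF compact_sphere ne cont] by blast
  define lam where "lam = Q x0"
  define B where "B x = lam *\<^sub>R x - M *v x" for x
  have Bsym: "inner (B x) y = inner x (B y)" for x y
  proof -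
    have "inner (M *v x) y = inner x (M *v y)" by (rule symm_inner[OF assms])
    then show ?thesis unfolding B_def by (simp add: inner_diff_left inner_diff_right inner_commute)
  qed
  have Blin: "B (x + t *\<^sub>R y) = B x + t *\<^sub>R B y" for x y t
    unfolding B_def by (simp add: matrix_vector_right_distrib algebra_simps matrix_vector_mult_scaleR)
  have psd: "inner x (B x) \<ge> 0" for x
  proof (cases "x = 0")
    case True then show ?thesis by simp
  next
    case False
    define y where "y = (1 / norm x) *\<^sub>R x"
    have "y \<in> sphere 0 1" using False by (simp add: y_def)
    then have "Q y \<le> lam" using mx lam_def by simp
    moreover have "Q y = Q x / (norm x)^2"
      by (simp add: Q_def y_def matrix_vector_mult_scaleR power2_eq_square)
    moreover have "inner x x = (norm x)^2" by (simp add: power2_norm_eq_inner)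
    ultimately have "Q x \<le> lam * inner x x" using False
      by (simp add: divide_le_eq mult.commute)
    then show ?thesis by (simp add: B_def Q_def inner_diff_right)
  qed
  have nx0: "norm x0 = 1" using x0 by simp
  have zero: "inner x0 (B x0) = 0"
    by (simp add: B_def inner_diff_right lam_def Q_def dot_square_norm nx0)
  define w where "w = B x0"
  have key: "0 \<le> 2 * t * inner w w + t^2 * inner w (B w)" for t
  proof -
    have "0 \<le> inner (x0 + t *\<^sub>R w) (B (x0 + t *\<^sub>R w))" by (rule psd)
    also have "\<dots> = inner x0 (B x0) + t * inner x0 (B w) + t * inner w (B x0) + t^2 * inner w (B w)"
      by (simp add: Blin inner_add_left inner_add_right power2_eq_square algebra_simps)
    also have "inner x0 (B w) = inner w (B x0)" by (metis Bsym inner_commute)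
    finally show ?thesis using zero by (simp add: w_def)
  qed
  have "inner w w = 0"
  proof (rule ccontr)
    assume nz: "inner w w \<noteq> 0"
    then have a: "inner w w > 0" by (simp add: order_less_le)
    define b where "b = inner w (B w)"
    have b: "b \<ge> 0" using psd by (simp add: b_def)
    define t where "t = - inner w w / (b + 1)"
    have "0 \<le> 2 * t * inner w w + t^2 * b" using key b_def by simp
    moreover have "2 * t * inner w w + t^2 * b < 0"
    proof -
      define a where "a = inner w w"
      have tb: "t * (b+1) = - a" using b by (simp add: t_def a_def)
      have "(b+1)^2 * (2*t*a + t^2*b) = 2*a*(t*(b+1))*(b+1) + (t*(b+1))^2 * b"
        by (simp add: algebra_simps power2_eq_square)
      also have "\<dots> = -(a^2)*(b+2)" using tb by (simp add: power2_eq_square algebra_simps)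
      finally have eq: "(b+1)^2 * (2*t*a + t^2*b) = -(a^2)*(b+2)" .
      have "-(a^2)*(b+2) < 0" using a b by (simp add: a_def)
      then have "(b+1)^2 * (2*t*a + t^2*b) < 0" using eq by simp
      moreover have "(b+1)^2 > 0" using b by simp
      ultimately have "2*t*a + t^2*b < 0" by (simp add: mult_less_0_iff)
      then show ?thesis by (simp add: a_def)
    qed
    ultimately show False by simp
  qed
  then have "w = 0" by simp
  then have "M *v x0 = lam *\<^sub>R x0" by (simp add: w_def B_def)
  moreover have "x0 \<noteq> 0" using nx0 by auto
  ultimately have "lam \<in> eigs M" unfolding eigs_def by blast
  then show ?thesis by blast
qed

lemma eig_bound:
  fixes M :: "real^'n^'n"
  assumes nn: "\<And>i j. M$i$j \<ge> 0" and xpos: "\<And>i. x$i > 0"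
    and strict: "\<And>i. (M *v x)$i < b * x$i"
    and l: "l \<in> eigs M"
  shows "l < b"
proof -
  obtain v where v: "v \<noteq> 0" "M *v v = l *\<^sub>R v" using l unfolding eigs_def by blast
  define r where "r i = \<bar>v$i\<bar> / x$i" for i
  define m where "m = Max (range r)"
  have "m \<in> range r" unfolding m_def by (rule Max_in) auto
  then obtain i where ri: "r i = m" by auto
  have i: "\<forall>j. r j \<le> r i" unfolding ri m_def by (auto intro: Max_ge)
  have rpos: "r i > 0"
  proof -
    obtain j where "v$j \<noteq> 0" using v(1) by (metis vec_eq_iff zero_index)
    then have "r j > 0" using xpos[of j] by (simp add: r_def)
    then show ?thesis using i by (meson less_le_trans)
  qed
  have vj: "\<bar>v$j\<bar> \<le> r i * x$j" for j
    using i[rule_format, of j] xpos[of j] by (simp add: r_def divide_le_eq)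
  have vi: "\<bar>v$i\<bar> = r i * x$i" using xpos[of i] by (simp add: r_def)
  have "\<bar>l\<bar> * \<bar>v$i\<bar> = \<bar>(M *v v)$i\<bar>" using v(2) by (simp add: abs_mult)
  also have "\<dots> = \<bar>\<Sum>j\<in>UNIV. M$i$j * v$j\<bar>" by (simp add: mv_comp)
  also have "\<dots> \<le> (\<Sum>j\<in>UNIV. \<bar>M$i$j * v$j\<bar>)" by (rule sum_abs)
  also have "\<dots> \<le> (\<Sum>j\<in>UNIV. M$i$j * (r i * x$j))"
    by (rule sum_mono) (simp add: abs_mult nn vj mult_left_mono)
  also have "\<dots> = r i * (M *v x)$i" by (simp add: mv_comp sum_distrib_left mult_ac)
  also have "\<dots> < r i * (b * x$i)" using strict rpos by simp
  also have "\<dots> = b * \<bar>v$i\<bar>" using vi by simp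
  finally have "\<bar>l\<bar> * \<bar>v$i\<bar> < b * \<bar>v$i\<bar>" .
  moreover have "\<bar>v$i\<bar> > 0" using vi rpos xpos[of i] by simp
  ultimately have "\<bar>l\<bar> < b" by simp
  then show ?thesis by simp
qed

lemma rho_less:
  fixes M :: "real^'n^'n"
  assumes "symm M" "\<And>i j. M$i$j \<ge> 0" "\<And>i. x$i > 0" "\<And>i. (M *v x)$i < b * x$i"
  shows "rho M < b"
proof -
  have "Max (eigs M) \<in> eigs M" using eigs_finite[OF assms(1)] eigs_nonempty[OF assms(1)] by (rule Max_in)
  then show ?thesis unfolding rho_eigs using eig_bound assms by blast
qed

lemma rho_eqI:
  fixes M :: "real^'n^'n"
  assumes "symm M" "c \<in> eigs M" "\<And>l. l \<in> eigs M \<Longrightarrow> l \<le> c"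
  shows "rho M = c"
  unfolding rho_eigs using eigs_finite[OF assms(1)] assms(2,3) by (intro Max_eqI) auto

lemma rho_in:
  fixes M :: "real^'n^'n"
  assumes "symm M"
  shows "rho M \<in> eigs M"
  unfolding rho_eigs using eigs_finite[OF assms] eigs_nonempty[OF assms] by (rule Max_in)


lemma A_entry: "A_alpha \<alpha> E $ i $ j = \<alpha> * (if i = j then real (degree E i) else 0) + (1-\<alpha>) * (if E i j then 1 else 0)"
  by (simp add: A_alpha_def deg_matrix_def adj_matrix_def)

lemma A_mv:
  fixes E :: "'a::finite \<Rightarrow> 'a \<Rightarrow> bool"
  shows "(A_alpha \<alpha> E *v x) $ v = \<alpha> * real (degree E v) * x$v + (1-\<alpha>) * (\<Sum>u\<in>{u. E v u}. x$u)"
proof -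
  have e: "A_alpha \<alpha> E $ v $ j * x$j = (if v = j then \<alpha> * real (degree E v) * x$j else 0) + (1-\<alpha>) * (if E v j then x$j else 0)" for j
    by (simp add: A_entry algebra_simps)
  have "(A_alpha \<alpha> E *v x) $ v = (\<Sum>j\<in>UNIV. (if v = j then \<alpha> * real (degree E v) * x$j else 0)) + (\<Sum>j\<in>UNIV. (1-\<alpha>) * (if E v j then x$j else 0))"
    unfolding mv_comp e by (rule sum.distrib)
  also have "(\<Sum>j\<in>UNIV. (if v = j then \<alpha> * real (degree E v) * x$j else 0)) = \<alpha> * real (degree E v) * x$v"
    by simp
  also have "(\<Sum>j\<in>UNIV. (1-\<alpha>) * (if E v j then x$j else 0)) = (1-\<alpha>) * (\<Sum>j\<in>UNIV. (if E v j then x$j else 0))"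
    by (rule sum_distrib_left[symmetric])
  also have "(\<Sum>j\<in>UNIV. (if E v j then x$j else 0)) = (\<Sum>u\<in>{u. E v u}. x$u)"
    using sum.inter_filter[of UNIV "\<lambda>u. x$u" "\<lambda>u. E v u"] by simp
  finally show ?thesis .
qed

context ucg begin

lemma deg_le3: "max_degree E = 3 \<Longrightarrow> degree E v \<le> 3"
proof -
  have "degree E v \<le> Max (range (degree E))" by (rule Max_ge) simp_all
  then show "max_degree E = 3 \<Longrightarrow> degree E v \<le> 3" unfolding max_degree_def by simp
qed

lemma A_symm: "symm (A_alpha \<alpha> E)"
  unfolding symm_def A_entry using symG by auto

lemma rho_bound:
  fixes f :: "nat \<Rightarrow> real" and \<alpha> b :: real
  assumes md: "max_degree E = 3" and a: "0 < \<alpha>" "\<alpha> < 1"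
    and K: "2 \<le> kG E"
    and fpos: "\<And>j. j < kG E \<Longrightarrow> 0 < f j" and fanti: "\<And>i j. i \<le> j \<Longrightarrow> f j \<le> f i"
    and fnn: "\<And>j. 0 \<le> f j"
    and H0: "3*\<alpha>*f 0 + (1-\<alpha>)*(2*f 0 + f 1) < b * f 0"
    and H1: "\<And>j. 1 \<le> j \<Longrightarrow> j + 1 < kG E \<Longrightarrow> 3*\<alpha>*f j + (1-\<alpha>)*(f (j-1) + 2*f (j+1)) < b * f j"
    and H2: "\<alpha> * f (kG E - 1) + (1-\<alpha>) * f (kG E - 2) < b * f (kG E - 1)"
  shows "rho (A_alpha \<alpha> E) < b"
proof (rule rho_less)
  define x :: "real^'a" where "x = (\<chi> v. f (dep v))"
  show "symm (A_alpha \<alpha> E)" by (rule A_symm)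
  show "0 \<le> A_alpha \<alpha> E $ i $ j" for i j using a by (simp add: A_entry)
  show "0 < x $ i" for i using fpos dep_lt_k by (simp add: x_def)
  fix v
  define N where "N = {u. E v u}"
  define d where "d = degree E v"
  have finN: "finite N" by simp
  have dN: "d = card N" by (simp add: d_def degree_def N_def)
  have d3: "real d \<le> 3" using deg_le3[OF md] d_def by simp
  have Ax: "(A_alpha \<alpha> E *v x) $ v = \<alpha> * real d * f (dep v) + (1-\<alpha>) * (\<Sum>u\<in>N. f (dep u))"
    by (simp add: A_mv x_def N_def d_def)
  have beta: "0 < 1 - \<alpha>" using a by simp
  show "(A_alpha \<alpha> E *v x) $ v < b * x $ v"
  proof (cases "v \<in> set C")
    case True
    then have dv: "dep v = 0" using dep0 by simp
    define NC where "NC = N \<inter> {u. u \<in> set C}"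
    define ND where "ND = N - {u. u \<in> set C}"
    have cNC: "card NC \<le> 2" using cyc_nbrs[OF True] by (simp add: NC_def N_def Int_def)
    have cN: "card N = card NC + card ND" using card_Int_Diff[OF finN] NC_def ND_def by blast
    have "(\<Sum>u\<in>NC. f (dep u)) = (\<Sum>u\<in>NC. f 0)"
    proof (rule sum.cong)
      fix u assume "u \<in> NC"
      then have "dep u = 0" using dep0 by (simp add: NC_def)
      then show "f (dep u) = f 0" by simp
    qed simp
    then have s1: "(\<Sum>u\<in>NC. f (dep u)) = real (card NC) * f 0" by simp
    have s2: "(\<Sum>u\<in>ND. f (dep u)) = real (card ND) * f 1"
    proof -
      have "dep u = 1" if "u \<in> ND" for u
      proof -
        have "E v u" "u \<notin> set C" using that by (auto simp: ND_def N_def)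
        then have "R v u" using R_notC2 by blast
        then have "dep u \<le> 1" using dep_edge dv by fastforce
        moreover have "dep u \<noteq> 0" using dep0 \<open>u \<notin> set C\<close> by simp
        ultimately show ?thesis by simp
      qed
      then show ?thesis by simp
    qed
    have sN: "(\<Sum>u\<in>N. f (dep u)) = real (card NC) * f 0 + real (card ND) * f 1"
      using sum.Int_Diff[OF finN, of "\<lambda>u. f (dep u)" "{u. u \<in> set C}"] s1 s2 NC_def ND_def by simp
    have f10: "f 1 \<le> f 0" using fanti by simp
    have f1: "0 \<le> f 1" using fnn by simp
    have pq: "real (card NC) + real (card ND) \<le> 3" using cN dN d3 by simp
    have p2: "real (card NC) \<le> 2" using cNC by simp
    have "real (card NC) * f 0 + real (card ND) * f 1 \<le> 2 * f 0 + f 1"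
    proof -
      have "real (card ND) * f 1 \<le> (3 - real (card NC)) * f 1"
        using pq f1 by (intro mult_right_mono) auto
      moreover have "real (card NC) * (f 0 - f 1) \<le> 2 * (f 0 - f 1)"
        using p2 f10 by (intro mult_right_mono) auto
      ultimately show ?thesis by (simp add: algebra_simps)
    qed
    then have "(1-\<alpha>) * (\<Sum>u\<in>N. f (dep u)) \<le> (1-\<alpha>) * (2 * f 0 + f 1)"
      using sN beta by (intro mult_left_mono) auto
    moreover have "\<alpha> * real d * f 0 \<le> 3 * \<alpha> * f 0"
      using d3 a fnn[of 0] by (simp add: mult_right_mono mult_left_mono mult.assoc)
    ultimately have "(A_alpha \<alpha> E *v x) $ v \<le> 3*\<alpha>*f 0 + (1-\<alpha>)*(2*f 0 + f 1)"
      using Ax dv by simp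
    also have "\<dots> < b * f 0" by (rule H0)
    finally show ?thesis using dv by (simp add: x_def)
  next
    case False
    define j where "j = dep v"
    have j1: "1 \<le> j" using False dep0 j_def by (cases j) auto
    have jK: "j < kG E" using dep_lt_k j_def by simp
    define P where "P = N \<inter> {u. dep u \<le> j}"
    define Q where "Q = N - {u. dep u \<le> j}"
    have cP: "card P \<le> 1"
    proof -
      have "\<forall>a\<in>P. \<forall>c\<in>P. a = c" using tree[OF False] by (auto simp: P_def N_def j_def)
      then show ?thesis using finN by (simp add: P_def card_le_Suc0_iff_eq)
    qed
    have cN: "card N = card P + card Q" using card_Int_Diff[OF finN] P_def Q_def by blast
    have sP: "(\<Sum>u\<in>P. f (dep u)) \<le> real (card P) * f (j - 1)"
    proof (rule sum_bounded_above)
      fix u assume "u \<in> P"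
      then have "E u v" using symG by (auto simp: P_def N_def)
      then have "R u v" using R_notC2 False by blast
      then have "j - 1 \<le> dep u" using dep_edge j_def by fastforce
      then show "f (dep u) \<le> f (j - 1)" by (rule fanti)
    qed
    have depQ: "dep u = j + 1" if "u \<in> Q" for u
    proof -
      have "E v u" "\<not> dep u \<le> j" using that by (auto simp: Q_def N_def)
      then have "R v u" using R_notC False by blast
      then have "dep u \<le> j + 1" using dep_edge j_def by fastforce
      then show ?thesis using \<open>\<not> dep u \<le> j\<close> by simp
    qed
    have sQ: "(\<Sum>u\<in>Q. f (dep u)) = real (card Q) * f (j + 1)"
      using depQ by simp
    have sN: "(\<Sum>u\<in>N. f (dep u)) \<le> real (card P) * f (j - 1) + real (card Q) * f (j + 1)"
      using sum.Int_Diff[OF finN, of "\<lambda>u. f (dep u)" "{u. dep u \<le> j}"] sP sQ P_def Q_def by simp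
    have pq: "real (card P) + real (card Q) \<le> 3" using cN dN d3 by simp
    have p1: "real (card P) \<le> 1" using cP by simp
    show ?thesis
    proof (cases "j + 1 < kG E")
      case True
      have fj: "f (j+1) \<le> f (j - 1)" using fanti by simp
      have fj0: "0 \<le> f (j+1)" using fnn by simp
      have "real (card P) * f (j - 1) + real (card Q) * f (j + 1) \<le> f (j - 1) + 2 * f (j + 1)"
      proof -
        have "real (card Q) * f (j+1) \<le> (3 - real (card P)) * f (j+1)"
          using pq fj0 by (intro mult_right_mono) auto
        moreover have "real (card P) * (f (j-1) - f (j+1)) \<le> 1 * (f (j-1) - f (j+1))"
          using p1 fj by (intro mult_right_mono) auto
        ultimately show ?thesis by (simp add: algebra_simps)
      qed
      then have "(1-\<alpha>) * (\<Sum>u\<in>N. f (dep u)) \<le> (1-\<alpha>) * (f (j - 1) + 2 * f (j + 1))"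
        using sN beta by (intro mult_left_mono) auto
      moreover have "\<alpha> * real d * f j \<le> 3 * \<alpha> * f j"
        using d3 a fnn[of j] by (simp add: mult_right_mono mult_left_mono mult.assoc)
      ultimately have "(A_alpha \<alpha> E *v x) $ v \<le> 3*\<alpha>*f j + (1-\<alpha>)*(f (j-1) + 2*f (j+1))"
        using Ax j_def by simp
      also have "\<dots> < b * f j" by (rule H1[OF j1 True])
      finally show ?thesis using j_def by (simp add: x_def)
    next
      case False
      then have jk: "j = kG E - 1" using jK by simp
      have "Q = {}"
      proof
        show "Q \<subseteq> {}"
        proof
          fix u assume "u \<in> Q"
          then have "dep u = j + 1" by (rule depQ)
          then show "u \<in> {}" using dep_lt_k[of u] jk K by simp
        qed
      qed simp
      then have dP: "d = card P" using cN dN by simp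
      have "(\<Sum>u\<in>N. f (dep u)) \<le> f (j - 1)"
      proof -
        have "real (card P) * f (j - 1) \<le> 1 * f (j - 1)"
          using p1 fnn by (intro mult_right_mono) auto
        then show ?thesis using sN \<open>Q = {}\<close> by simp
      qed
      then have "(1-\<alpha>) * (\<Sum>u\<in>N. f (dep u)) \<le> (1-\<alpha>) * f (j - 1)"
        using beta by (intro mult_left_mono) auto
      moreover have "\<alpha> * real d * f j \<le> \<alpha> * f j"
        using dP p1 a fnn[of j] by (simp add: mult_right_mono mult_left_mono)
      ultimately have "(A_alpha \<alpha> E *v x) $ v \<le> \<alpha> * f j + (1-\<alpha>) * f (j - 1)"
        using Ax j_def by simp
      also have "\<dots> < b * f j" using H2 jk by (simp add: numeral_2_eq_2)
      finally show ?thesis using j_def by (simp add: x_def)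
    qed
  qed
qed

end

lemma near_left:
  fixes h :: "real \<Rightarrow> real"
  assumes "isCont h c" "h c > 0" "a < c"
  shows "\<exists>y. a < y \<and> y < c \<and> h y > 0"
proof -
  have "eventually (\<lambda>y. h y > 0) (at c)"
    using order_tendstoD(1)[OF assms(1)[unfolded isCont_def] assms(2)] .
  then have e1: "eventually (\<lambda>y. h y > 0) (at_left c)" by (simp add: eventually_at_split)
  have e2: "eventually (\<lambda>y. y \<in> {a<..<c}) (at_left c)" using eventually_at_left_real assms(3) by blast
  have "eventually (\<lambda>y. h y > 0 \<and> y \<in> {a<..<c}) (at_left c)" using e1 e2 by (rule eventually_conj)
  moreover have "at_left c \<noteq> (bot :: real filter)" using trivial_limit_at_left_real trivial_limit_def by blast
  ultimately obtain y where "h y > 0 \<and> y \<in> {a<..<c}" using eventually_happens' by blast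
  then show ?thesis by auto
qed

lemma Z_entries:
  "Zmat g $ 1 $ 1 = g" "Zmat g $ 1 $ 2 = sqrt 2" "Zmat g $ 1 $ 3 = 0"
  "Zmat g $ 2 $ 1 = sqrt 2" "Zmat g $ 2 $ 2 = 0" "Zmat g $ 2 $ 3 = 1"
  "Zmat g $ 3 $ 1 = 0" "Zmat g $ 3 $ 2 = 1" "Zmat g $ 3 $ 3 = 2"
  by (simp_all add: Zmat_def)

lemma W_entries:
  "Wmat g $ 1 $ 1 = g" "Wmat g $ 1 $ 2 = 1" "Wmat g $ 2 $ 1 = 1" "Wmat g $ 2 $ 2 = 2"
  by (simp_all add: Wmat_def)

lemma Z_mv: "(Zmat g *v v) $ 1 = g * v$1 + sqrt 2 * v$2"
  "(Zmat g *v v) $ 2 = sqrt 2 * v$1 + v$3"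
  "(Zmat g *v v) $ 3 = v$2 + 2 * v$3"
  by (simp_all add: mv_comp sum_3 Z_entries)

lemma W_mv: "(Wmat g *v v) $ 1 = g * v$1 + v$2"
  "(Wmat g *v v) $ 2 = v$1 + 2 * v$2"
  by (simp_all add: mv_comp sum_2 W_entries)

lemma Z_symm: "symm (Zmat g)"
  unfolding symm_def by (simp add: forall_3 Z_entries)

lemma W_symm: "symm (Wmat g)"
  unfolding symm_def by (simp add: forall_2 W_entries)

lemma Z_eig:
  assumes "l \<in> eigs (Zmat g)"
  shows "(l - g) * (l^2 - 2*l - 1) = 2 * (l - 2)"
proof -
  obtain v where v: "v \<noteq> 0" "Zmat g *v v = l *\<^sub>R v" using assms unfolding eigs_def by blast
  have e1: "g * v$1 + sqrt 2 * v$2 = l * v$1" using arg_cong[OF v(2), of "\<lambda>w. w$1"] by (simp add: Z_mv)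
  have e2: "sqrt 2 * v$1 + v$3 = l * v$2" using arg_cong[OF v(2), of "\<lambda>w. w$2"] by (simp add: Z_mv)
  have e3: "v$2 + 2 * v$3 = l * v$3" using arg_cong[OF v(2), of "\<lambda>w. w$3"] by (simp add: Z_mv)
  have v3: "v$3 \<noteq> 0"
  proof
    assume "v$3 = 0"
    then have "v$2 = 0" using e3 by simp
    then have "v$1 = 0" using e2 \<open>v$3 = 0\<close> by simp
    then have "v = 0" using \<open>v$2 = 0\<close> \<open>v$3 = 0\<close> by (simp add: vec_eq_iff forall_3)
    then show False using v(1) by simp
  qed
  define s where "s = sqrt 2"
  have ss: "s * s = 2" by (simp add: s_def)
  define w where "w = s * v$1"
  have a2: "v$2 = (l - 2) * v$3" using e3 by (simp add: algebra_simps)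
  have a1: "w = (l^2 - 2*l - 1) * v$3"
  proof -
    have "w = l * v$2 - v$3" using e2 by (simp add: w_def s_def)
    then show ?thesis using a2 by (simp add: algebra_simps power2_eq_square)
  qed
  have "s * (g * v$1 + s * v$2) = s * (l * v$1)" using e1 by (simp add: s_def)
  moreover have "s * (s * v$2) = 2 * v$2" using ss by (metis mult.assoc)
  ultimately have "g * w + 2 * v$2 = l * w" by (simp add: w_def algebra_simps)
  then have "(l - g) * w = 2 * v$2" by (simp add: algebra_simps)
  then have "((l - g) * (l^2 - 2*l - 1)) * v$3 = (2 * (l - 2)) * v$3"
    using a1 a2 by (simp add: algebra_simps)
  then show ?thesis using v3 by simp
qed

lemma Z_eig_in:
  assumes "(c - g) * (c^2 - 2*c - 1) = 2 * (c - 2)"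
  shows "c \<in> eigs (Zmat g)"
proof -
  define v :: "real^3" where "v = vector [(c^2 - 2*c - 1) / sqrt 2, c - 2, 1]"
  have v1: "v$1 = (c^2 - 2*c - 1) / sqrt 2" and v2: "v$2 = c - 2" and v3: "v$3 = 1"
    by (simp_all add: v_def)
  have "v \<noteq> 0" using v3 by auto
  moreover have "Zmat g *v v = c *\<^sub>R v"
  proof -
    have sv0: "sqrt 2 * v$1 = c^2 - 2*c - 1" by (simp add: v1)
    have "g * v$1 + sqrt 2 * v$2 = c * v$1"
    proof -
      have sv: "sqrt 2 * v$1 = c^2 - 2*c - 1" by (simp add: v1)
      have "sqrt 2 * (g * v$1 + sqrt 2 * v$2) = g * (sqrt 2 * v$1) + 2 * (c - 2)"
        by (simp add: v2 algebra_simps)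
      also have "\<dots> = g * (c^2 - 2*c - 1) + 2 * (c - 2)" by (simp only: sv)
      also have "\<dots> = c * (c^2 - 2*c - 1)" using assms by (simp add: algebra_simps)
      also have "\<dots> = c * (sqrt 2 * v$1)" by (simp only: sv)
      also have "\<dots> = sqrt 2 * (c * v$1)" by simp
      finally show ?thesis by simp
    qed
    moreover have "sqrt 2 * v$1 + v$3 = c * v$2" unfolding sv0 by (simp add: v2 v3 algebra_simps power2_eq_square)
    moreover have "v$2 + 2 * v$3 = c * v$3" by (simp add: v2 v3)
    ultimately show ?thesis by (simp add: vec_eq_iff forall_3 Z_mv)
  qed
  ultimately show ?thesis unfolding eigs_def by blast
qed

lemma W_eig:
  assumes "l \<in> eigs (Wmat g)"
  shows "(l - g) * (l - 2) = 1"
proof -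
  obtain v where v: "v \<noteq> 0" "Wmat g *v v = l *\<^sub>R v" using assms unfolding eigs_def by blast
  have e1: "g * v$1 + v$2 = l * v$1" using arg_cong[OF v(2), of "\<lambda>w. w$1"] by (simp add: W_mv)
  have e2: "v$1 + 2 * v$2 = l * v$2" using arg_cong[OF v(2), of "\<lambda>w. w$2"] by (simp add: W_mv)
  have v2: "v$2 \<noteq> 0"
  proof
    assume "v$2 = 0"
    then have "v$1 = 0" using e2 by simp
    then have "v = 0" using \<open>v$2 = 0\<close> by (simp add: vec_eq_iff forall_2)
    then show False using v(1) by simp
  qed
  have a1: "v$1 = (l - 2) * v$2" using e2 by (simp add: algebra_simps)
  have "((l - g) * (l - 2)) * v$2 = 1 * v$2" using e1 a1 by (simp add: algebra_simps)
  then show ?thesis using v2 by simp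
qed

lemma W_eig_in:
  assumes "(c - g) * (c - 2) = 1"
  shows "c \<in> eigs (Wmat g)"
proof -
  define v :: "real^2" where "v = vector [c - 2, 1]"
  have v1: "v$1 = c - 2" and v2: "v$2 = 1" by (simp_all add: v_def)
  have "v \<noteq> 0" using v2 by auto
  moreover have "Wmat g *v v = c *\<^sub>R v"
  proof -
    have "g * v$1 + v$2 = c * v$1" using assms by (simp add: v1 v2 algebra_simps)
    moreover have "v$1 + 2 * v$2 = c * v$2" by (simp add: v1 v2)
    ultimately show ?thesis by (simp add: vec_eq_iff forall_2 W_mv)
  qed
  ultimately show ?thesis unfolding eigs_def by blast
qed

definition c7 :: real where "c7 = 2 * sqrt 2 * cos (pi / 7)"
definition c5 :: real where "c5 = 2 * sqrt 2 * cos (pi / 5)"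

lemma sqrt2_bd: "sqrt 2 < 1.415"
proof -
  have "sqrt 2 < sqrt ((1.415::real)^2)" by (rule real_sqrt_less_mono) (simp add: power2_eq_square)
  then show ?thesis by simp
qed

lemma c7_bounds: "2.44 < c7" "c7 < 2.83"
proof -
  have "cos (pi / 6) < cos (pi / 7)" by (rule cos_monotone_0_pi) (auto simp: divide_strict_left_mono)
  then have "sqrt 3 / 2 < cos (pi / 7)" by (simp add: cos_30)
  then have "2 * sqrt 2 * (sqrt 3 / 2) < c7" unfolding c7_def by simp
  moreover have "2 * sqrt 2 * (sqrt 3 / 2) = sqrt 6"
    by (simp add: real_sqrt_mult[symmetric])
  moreover have "2.44 < sqrt 6" by (rule real_less_rsqrt) (simp add: power2_eq_square)
  ultimately show "2.44 < c7" by simp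
  have "cos (pi / 7) < cos 0" by (rule cos_monotone_0_pi) auto
  then have "c7 < 2 * sqrt 2" unfolding c7_def by simp
  moreover have "sqrt 2 < 1.415" using sqrt2_bd by simp
  ultimately show "c7 < 2.83" by simp
qed

lemma c5_bounds: "2 < c5" "c5 < 2.83"
proof -
  have "cos (pi / 4) < cos (pi / 5)" by (rule cos_monotone_0_pi) (auto simp: divide_strict_left_mono)
  then have "sqrt 2 / 2 < cos (pi / 5)" by (simp add: cos_45)
  then have "sqrt 2 * sqrt 2 < sqrt 2 * (2 * cos (pi / 5))" by (intro mult_strict_left_mono) auto
  then show "2 < c5" unfolding c5_def by (simp add: mult_ac)
  have "cos (pi / 5) < cos 0" by (rule cos_monotone_0_pi) auto
  then have "c5 < 2 * sqrt 2" unfolding c5_def by simp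
  moreover have "sqrt 2 < 1.415" using sqrt2_bd by simp
  ultimately show "c5 < 2.83" by simp
qed


lemma P7_pos: "0 < c7^2 - 2*c7 - 1"
proof -
  have "1.44 < c7 - 1" using c7_bounds by simp
  then have "1.44 * 1.44 < (c7 - 1) * (c7 - 1)" by (intro mult_strict_mono) auto
  then show ?thesis by (simp add: power2_eq_square algebra_simps)
qed

lemma P7_lt2: "c7^2 - 2*c7 - 1 < 2"
proof -
  have "(c7 - 3) * (c7 + 1) < 0" using c7_bounds by (intro mult_neg_pos) auto
  then show ?thesis by (simp add: power2_eq_square algebra_simps)
qed

lemma gamma0_key: "(c7 - gamma0) * (c7^2 - 2*c7 - 1) = 2 * (c7 - 2)"
proof -
  define P where "P = c7^2 - 2*c7 - 1"
  have P: "0 < P" using P7_pos P_def by simp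
  define gs where "gs = c7 - 2*(c7-2)/P"
  have key: "(c7 - gs) * (c7^2 - 2*c7 - 1) = 2 * (c7 - 2)" using P by (simp add: gs_def P_def[symmetric])
  have max: "l \<le> c7" if l: "l \<in> eigs (Zmat gs)" for l
  proof (rule ccontr)
    assume "\<not> l \<le> c7"
    then have dpos: "0 < l - c7" by simp
    define d where "d = l - c7"
    define g1 where "g1 = (c7 - gs) * (2*c7 - 2) + P - 2"
    define g2 where "g2 = (c7 - gs) + 2*c7 - 2"
    have id: "(l - gs) * (l^2 - 2*l - 1) - 2 * (l - 2) = ((c7 - gs) * P - 2 * (c7 - 2)) + d * g1 + d^2 * g2 + d^3"
      by (simp add: d_def g1_def g2_def P_def power2_eq_square power3_eq_cube algebra_simps)
    have kP: "(c7 - gs) * P = 2 * (c7 - 2)" using key P_def by simp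
    have cg: "0 < c7 - gs"
    proof -
      have "0 < (c7 - gs) * P" using kP c7_bounds by simp
      then show ?thesis using P by (simp add: zero_less_mult_iff)
    qed
    have "g1 * P = ((c7 - gs) * P) * (2*c7 - 2) + P * (P - 2)"
      by (simp add: g1_def algebra_simps)
    also have "\<dots> = 2 * (c7 - 2) * (2*c7 - 2) + P * (P - 2)" by (simp only: kP)
    finally have g1P: "g1 * P = 2 * (c7 - 2) * (2*c7 - 2) + P * (P - 2)" .
    have "0.44 * 1.44 < (c7 - 2) * (c7 - 1)" using c7_bounds by (intro mult_strict_mono) auto
    moreover have "P * (P - 2) \<ge> -1"
    proof -
      have "0 \<le> (P - 1)^2" by simp
      then show ?thesis by (simp add: power2_eq_square algebra_simps)
    qed
    ultimately have "0 < g1 * P" using g1P by (simp add: algebra_simps)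
    then have g1: "0 < g1" using P by (simp add: zero_less_mult_iff)
    have g2: "0 < g2" using cg c7_bounds by (simp add: g2_def)
    have "0 < d * g1 + d^2 * g2 + d^3" using dpos g1 g2 d_def by (simp add: add_pos_pos)
    then have "0 < (l - gs) * (l^2 - 2*l - 1) - 2 * (l - 2)" using id kP by simp
    moreover have "(l - gs) * (l^2 - 2*l - 1) = 2 * (l - 2)" using Z_eig[OF l] .
    ultimately show False by simp
  qed
  have rs: "rho (Zmat gs) = c7" by (rule rho_eqI[OF Z_symm Z_eig_in[OF key] max])
  have uniq: "g = gs" if "rho (Zmat g) = c7" for g
  proof -
    have "c7 \<in> eigs (Zmat g)" using rho_in[OF Z_symm, of g] that by simp
    then have "(c7 - g) * P = 2 * (c7 - 2)" using Z_eig P_def by simp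
    then have "c7 - g = 2 * (c7 - 2) / P" using P by (simp add: field_simps)
    then show ?thesis by (simp add: gs_def)
  qed
  have "gamma0 = gs" unfolding gamma0_def c7_def[symmetric]
    using rs uniq by (rule the_equality)
  then show ?thesis using key by simp
qed

lemma delta0_key: "(c5 - delta0) * (c5 - 2) = 1"
proof -
  have P: "0 < c5 - 2" using c5_bounds by simp
  define ds where "ds = c5 - 1/(c5 - 2)"
  have key: "(c5 - ds) * (c5 - 2) = 1" using P by (simp add: ds_def)
  have max: "l \<le> c5" if l: "l \<in> eigs (Wmat ds)" for l
  proof (rule ccontr)
    assume "\<not> l \<le> c5"
    then have lc: "c5 < l" by simp
    have "0 < c5 - ds" using key P by (simp add: ds_def)
    then have "(c5 - ds) * (c5 - 2) < (l - ds) * (l - 2)" using lc P by (intro mult_strict_mono) auto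
    then show False using W_eig[OF l] key by simp
  qed
  have rs: "rho (Wmat ds) = c5" by (rule rho_eqI[OF W_symm W_eig_in[OF key] max])
  have uniq: "g = ds" if "rho (Wmat g) = c5" for g
  proof -
    have "c5 \<in> eigs (Wmat g)" using rho_in[OF W_symm, of g] that by simp
    then have "(c5 - g) * (c5 - 2) = 1" using W_eig by simp
    then have "c5 - g = 1 / (c5 - 2)" using P by (simp add: field_simps)
    then show ?thesis by (simp add: ds_def)
  qed
  have "delta0 = ds" unfolding delta0_def c5_def[symmetric]
    using rs uniq by (rule the_equality)
  then show ?thesis using key by simp
qed


theorem mainTheorem12:
  fixes E :: "'a::finite \<Rightarrow> 'a \<Rightarrow> bool" and \<alpha> :: real
  assumes "simple_graph E"
    and "unicyclic E"
    and "max_degree E = 3"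
    and "0 < \<alpha>" and "\<alpha> < 1"
    and "(kG E = 3 \<and> \<alpha> > - gamma0 / (2 - gamma0)) \<or> (kG E = 2 \<and> \<alpha> > - delta0 / (2 - delta0))"
  shows "rho (A_alpha \<alpha> E) < 3 * \<alpha> + 2 * (1 - \<alpha>) * sqrt 2 * cos (pi / (2 * real (kG E) + 1))"
proof -
  interpret ucg E using assms(1,2) by unfold_locales
  define \<beta> where "\<beta> = 1 - \<alpha>"
  have b0: "0 < \<beta>" using assms(5) by (simp add: \<beta>_def)
  define \<mu> where "\<mu> = 2 * \<alpha> / \<beta> + c7"
  from assms(6) show ?thesis
  proof
    assume A: "kG E = 3 \<and> \<alpha> > - gamma0 / (2 - gamma0)"
    define c where "c = c7"
    define P where "P = c^2 - 2*c - 1"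
    have P: "0 < P" "P < 2" using P7_pos P7_lt2 by (simp_all add: P_def c_def)
    have cb: "2.44 < c" "c < 2.83" using c7_bounds by (simp_all add: c_def)
    have key: "(c - gamma0) * P = 2 * (c - 2)" using gamma0_key by (simp add: c_def P_def)
    have cg: "c - gamma0 = 2 * (c - 2) / P" using key P by (simp add: field_simps)
    have g2: "0 < 2 - gamma0"
    proof -
      have "(c - 2) * P < (c - 2) * 2" using P cb by (intro mult_strict_left_mono) auto
      then have "c - 2 < 2 * (c - 2) / P" using P by (simp add: field_simps)
      then show ?thesis using cg by simp
    qed
    have t: "(- gamma0) / (2 - gamma0) < \<alpha>" using A by (metis minus_divide_left)
    have "- gamma0 < \<alpha> * (2 - gamma0)" using pos_divide_less_eq[OF g2] t by blast
    then have "- gamma0 * \<beta> < 2 * \<alpha>" by (simp add: \<beta>_def algebra_simps)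
    then have "- gamma0 < 2 * \<alpha> / \<beta>" using b0 by (simp add: less_divide_eq)
    then have mu: "2 * (c - 2) / P < \<mu>" using cg by (simp add: \<mu>_def c_def)
    define h where "h y = \<mu> * (y^2 - 2*y - 1) / 2 - (y - 2)" for y
    have hc: "0 < h c"
    proof -
      have "2 * (c - 2) < \<mu> * P" using mu P by (simp add: divide_less_eq)
      moreover have "h c = \<mu> * P / 2 - (c - 2)" by (simp add: h_def P_def)
      moreover have "(0::real) < \<mu> * P / 2 - (c - 2)" using \<open>2 * (c - 2) < \<mu> * P\<close> by (simp add: field_simps)
      ultimately show ?thesis by simp
    qed
    have "isCont h c" unfolding h_def by (intro continuous_intros) auto
    then obtain c' where c': "2.44 < c'" "c' < c" "0 < h c'" using near_left[where h=h and c=c, OF _ hc cb(1)] by blast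
    define P' where "P' = c'^2 - 2*c' - 1"
    have P': "0 < P'"
    proof -
      have "1.44 < c' - 1" using c' by simp
      then have "1.44 * 1.44 < (c' - 1) * (c' - 1)" by (intro mult_strict_mono) auto
      then show ?thesis by (simp add: P'_def power2_eq_square algebra_simps)
    qed
    define f :: "nat \<Rightarrow> real" where
      "f j = (if j = 0 then 1 else if j = 1 then c' - 2 else if j = 2 then P' / 2 else 0)" for j
    have f0: "f 0 = 1" and f1: "f 1 = c' - 2" and f2: "f 2 = P' / 2" by (simp_all add: f_def)
    have f12: "P' / 2 \<le> c' - 2"
    proof -
      have "(c' - 1) * (c' - 3) \<le> 0" using c' cb by (intro mult_nonneg_nonpos) auto
      then have "P' \<le> 2 * (c' - 2)" by (simp add: P'_def power2_eq_square algebra_simps)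
      then show ?thesis by simp
    qed
    have dec: "decseq f" unfolding decseq_Suc_iff
    proof
      fix n show "f (Suc n) \<le> f n"
        using f12 P' c' cb by (cases "n = 0"; cases "n = 1"; cases "n = 2") (auto simp: f_def)
    qed
    have b_eq: "3 * \<alpha> + 2 * (1 - \<alpha>) * sqrt 2 * cos (pi / (2 * real (kG E) + 1)) = 3*\<alpha> + \<beta> * c"
      using A by (simp add: c_def c7_def \<beta>_def)
    have "rho (A_alpha \<alpha> E) < 3*\<alpha> + \<beta> * c"
    proof (rule rho_bound[where f = f])
      show "max_degree E = 3" "0 < \<alpha>" "\<alpha> < 1" using assms by auto
      show "2 \<le> kG E" using A by simp
      show "0 < f j" if "j < kG E" for j using that A P' c' by (auto simp: f_def)
      show "f j \<le> f i" if "i \<le> j" for i j using dec that by (simp add: antimonoD)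
      show "0 \<le> f j" for j using P' c' by (simp add: f_def)
      show "3*\<alpha>*f 0 + (1-\<alpha>)*(2*f 0 + f 1) < (3*\<alpha> + \<beta> * c) * f 0"
      proof -
        have "\<beta> * c' < \<beta> * c" using b0 c' by simp
        then show ?thesis by (simp add: f_def \<beta>_def algebra_simps)
      qed
      show "3*\<alpha>*f j + (1-\<alpha>)*(f (j-1) + 2*f (j+1)) < (3*\<alpha> + \<beta> * c) * f j"
        if "1 \<le> j" "j + 1 < kG E" for j
      proof -
        have j: "j = 1" using that A by simp
        have "f 0 + 2 * f 2 = c' * (c' - 2)" by (simp add: f0 f2 P'_def power2_eq_square field_simps)
        also have "\<dots> < c * (c' - 2)" using c' by (intro mult_strict_right_mono) auto
        finally have "\<beta> * (f 0 + 2 * f 2) < \<beta> * (c * f 1)" using b0 f1 by simp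
        then show ?thesis using j by (simp add: \<beta>_def[symmetric] algebra_simps numeral_2_eq_2)
      qed
      show "\<alpha> * f (kG E - 1) + (1-\<alpha>) * f (kG E - 2) < (3*\<alpha> + \<beta> * c) * f (kG E - 1)"
      proof -
        have "c' - 2 < \<mu> * P' / 2" using c'(3) by (simp add: h_def P'_def)
        then have "\<beta> * (c' - 2) < \<beta> * (\<mu> * P' / 2)" using b0 by simp
        also have "\<beta> * (\<mu> * P' / 2) = (2 * \<alpha> + \<beta> * c) * (P' / 2)"
          using b0 by (simp add: \<mu>_def c_def field_simps)
        finally have "\<beta> * f 1 < (2 * \<alpha> + \<beta> * c) * f 2" by (simp add: f_def)
        then show ?thesis using A by (simp add: \<beta>_def[symmetric] algebra_simps numeral_2_eq_2)
      qed
    qed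
    then show ?thesis using b_eq by simp
  next
    assume A: "kG E = 2 \<and> \<alpha> > - delta0 / (2 - delta0)"
    define c where "c = c5"
    have cb: "2 < c" "c < 2.83" using c5_bounds by (simp_all add: c_def)
    have key: "(c - delta0) * (c - 2) = 1" using delta0_key by (simp add: c_def)
    have cg: "c - delta0 = 1 / (c - 2)" using key cb by (simp add: field_simps)
    have g2: "0 < 2 - delta0"
    proof -
      have "(c - 2) * (c - 2) < 1 * 1" using cb by (intro mult_strict_mono) auto
      then have "c - 2 < 1 / (c - 2)" using cb by (simp add: field_simps)
      then show ?thesis using cg by simp
    qed
    define \<nu> where "\<nu> = 2 * \<alpha> / \<beta> + c"
    have t: "(- delta0) / (2 - delta0) < \<alpha>" using A by (metis minus_divide_left)
    have "- delta0 < \<alpha> * (2 - delta0)" using pos_divide_less_eq[OF g2] t by blast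
    then have "- delta0 * \<beta> < 2 * \<alpha>" by (simp add: \<beta>_def algebra_simps)
    then have "- delta0 < 2 * \<alpha> / \<beta>" using b0 by (simp add: less_divide_eq)
    then have mu: "1 / (c - 2) < \<nu>" using cg by (simp add: \<nu>_def)
    define h where "h y = \<nu> * (y - 2) - 1" for y
    have hc: "0 < h c"
    proof -
      have "1 < \<nu> * (c - 2)" using mu cb by (simp add: divide_less_eq)
      then show ?thesis by (simp add: h_def)
    qed
    have "isCont h c" unfolding h_def by (intro continuous_intros)
    then obtain c' where c': "2 < c'" "c' < c" "0 < h c'" using near_left[where h=h and c=c, OF _ hc cb(1)] by blast
    define f :: "nat \<Rightarrow> real" where
      "f j = (if j = 0 then 1 else if j = 1 then c' - 2 else 0)" for j
    have f0: "f 0 = 1" and f1: "f 1 = c' - 2" by (simp_all add: f_def)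
    have dec: "decseq f" unfolding decseq_Suc_iff
    proof
      fix n show "f (Suc n) \<le> f n"
        using c' cb by (cases "n = 0"; cases "n = 1") (auto simp: f_def)
    qed
    have b_eq: "3 * \<alpha> + 2 * (1 - \<alpha>) * sqrt 2 * cos (pi / (2 * real (kG E) + 1)) = 3*\<alpha> + \<beta> * c"
      using A by (simp add: c_def c5_def \<beta>_def)
    have "rho (A_alpha \<alpha> E) < 3*\<alpha> + \<beta> * c"
    proof (rule rho_bound[where f = f])
      show "max_degree E = 3" "0 < \<alpha>" "\<alpha> < 1" using assms by auto
      show "2 \<le> kG E" using A by simp
      show "0 < f j" if "j < kG E" for j using that A c' by (auto simp: f_def)
      show "f j \<le> f i" if "i \<le> j" for i j using dec that by (simp add: antimonoD)
      show "0 \<le> f j" for j using c' by (simp add: f_def)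
      show "3*\<alpha>*f 0 + (1-\<alpha>)*(2*f 0 + f 1) < (3*\<alpha> + \<beta> * c) * f 0"
      proof -
        have "\<beta> * c' < \<beta> * c" using b0 c' by simp
        then show ?thesis by (simp add: f_def \<beta>_def algebra_simps)
      qed
      show "3*\<alpha>*f j + (1-\<alpha>)*(f (j-1) + 2*f (j+1)) < (3*\<alpha> + \<beta> * c) * f j"
        if "1 \<le> j" "j + 1 < kG E" for j
        using that A by simp
      show "\<alpha> * f (kG E - 1) + (1-\<alpha>) * f (kG E - 2) < (3*\<alpha> + \<beta> * c) * f (kG E - 1)"
      proof -
        have "1 < \<nu> * (c' - 2)" using c'(3) by (simp add: h_def)
        then have "\<beta> * 1 < \<beta> * (\<nu> * (c' - 2))" using b0 by simp
        also have "\<beta> * (\<nu> * (c' - 2)) = (2 * \<alpha> + \<beta> * c) * (c' - 2)"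
          using b0 by (simp add: \<nu>_def field_simps)
        finally have "\<beta> * f 0 < (2 * \<alpha> + \<beta> * c) * f 1" by (simp add: f_def)
        then show ?thesis using A by (simp add: \<beta>_def[symmetric] algebra_simps numeral_2_eq_2)
      qed
    qed
    then show ?thesis using b_eq by simp
  qed
qed


end
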